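(* In the model described in the context, it is impossible to implement an a-audit operation satisfying both completeness and strong accuracy.
   Context: Model. An asynchronous system has an arbitrary number of client processes (writers, readers, auditors) and $n$ storage objects $o_1,\dots,o_n$. Each $o_k$ is a linearisable loggable read/write register holding a block and a log $L_k$ (initially empty). Its operations are: rw-write($b$), which stores $b$; rw-read(), which returns the current block (or $\perp$) and appends $\langle p_r,\mathit{label}(b)\rangle$ to $L_k$, where $p_r$ is the reader and $\mathit{label}(b)$ identifies the value from which $b$ was derived; and rw-getLog(), which returns $L_k$. A multi-writer multi-reader register over values $\mathbb{V}$ is emulated by information dispersal. An a-write($v$) encodes $v$ into blocks $b_{v_1},\dots,b_{v_n}$, with $b_{v_k}$ sent to $o_k$. Any $\tau$ distinct blocks of $v$ suffice to recover $v$, and fewer do not; $\tau>f$. Reads are fast (one round-trip). Concurrency between operations is unlimited, and writes may be left incomplete. Faults. Writers and auditors can only crash. Faulty readers may crash or contact a subset of the objects. At most $f$ objects are faulty; a faulty object may crash, omit its block from readers, omit log records from auditors, and report records of nonexistent reads. Providing set $P_{p_r,v}$: the set of objects $o_k$ that, in the history, received a write request for $b_{v_k}$ and responded $b_{v_k}$ to a read request of $p_r$. The value $v$ is effectively read by $p_r$ iff $|P_{p_r,v}|\ge\tau$. Audit. An a-audit obtains logs from an auditing quorum $A$ of $n-f$ objects. It returns a set $E_A$ of evidences, each evidence $\mathcal{E}_{p_r,v}$ being created from at least $t\ge1$ records $\langle p_r,\mathit{label}(v)\rangle$ from distinct objects. Completeness: $|P_{p_r,v}|\ge\tau$ before the audit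 implies $\mathcal{E}_{p_r,v}\in E_A$. Strong accuracy: for every correct reader $p_r$ and every value $v$, $|P_{p_r,v}|<\tau$ before the audit implies $\mathcal{E}_{p_r,v}\notin E_A$. *)

theory Defs
  imports Main
begin

(* Events at a storage object o_k, in the order of its linearisation.
  Wr v: the object received the rw-write request for block b_{v_k} of value v.
  Rd p r: the object received an rw-read request from reader p; r says whether
  the object responded (a faulty object may omit its block; correct objects always respond). *)
datatype ('p, 'v) oev = Wr 'v | Rd 'p bool

(* Log record: reader and label of the value from which the returned block derives
  (None stands for the initial block bottom). *)
type_synonym ('p, 'v) lrec = "'p \<times> 'v option"

definition wstate :: "('p, 'v) oev list \<Rightarrow> 'v option" where
  "wstate es = foldl (\<lambda>s e. case e of Wr v \<Rightarrow> Some v | Rd _ _ \<Rightarrow> s) None es"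

fun tlog :: "'v option \<Rightarrow> ('p, 'v) oev list \<Rightarrow> ('p, 'v) lrec list" where
  "tlog s [] = []"
| "tlog s (Wr v # es) = tlog (Some v) es"
| "tlog s (Rd p r # es) = (p, s) # tlog s es"

definition nreads :: "'p \<Rightarrow> ('p, 'v) oev list \<Rightarrow> nat" where
  "nreads p es = length (filter (\<lambda>e. \<exists>r. e = Rd p r) es)"

(* A history (up to the start of the audit): events at each object, the set of faulty
  objects, the set of correct readers, and the logs the objects report to the auditor. *)
record ('p, 'v) hist =
  evs :: "nat \<Rightarrow> ('p, 'v) oev list"
  faulty :: "nat set"
  creaders :: "'p set"
  rep :: "nat \<Rightarrow> ('p, 'v) lrec list"

(* Correct objects respond to every read and report exactly their log; faulty objects may
  omit responses and report arbitrary logs (omitting records / reporting nonexistent reads).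
  A correct reader sends each of its rw-read requests to all objects. *)
definition admissible :: "nat \<Rightarrow> nat \<Rightarrow> ('p, 'v) hist \<Rightarrow> bool" where
  "admissible n f h \<longleftrightarrow>
     faulty h \<subseteq> {1..n} \<and> card (faulty h) \<le> f \<and>
     (\<forall>k\<in>{1..n}. k \<notin> faulty h \<longrightarrow>
        (\<forall>p. Rd p False \<notin> set (evs h k)) \<and> rep h k = tlog None (evs h k)) \<and>
     (\<forall>p\<in>creaders h. \<forall>k\<in>{1..n}. \<forall>j\<in>{1..n}. nreads p (evs h k) = nreads p (evs h j))"

definition providing :: "nat \<Rightarrow> ('p, 'v) hist \<Rightarrow> 'p \<Rightarrow> 'v \<Rightarrow> nat set" where
  "providing n h p v = {k \<in> {1..n}. Wr v \<in> set (evs h k) \<and>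
      (\<exists>i < length (evs h k). evs h k ! i = Rd p True \<and> wstate (take i (evs h k)) = Some v)}"

definition quorum :: "nat \<Rightarrow> nat \<Rightarrow> nat set \<Rightarrow> bool" where
  "quorum n f A \<longleftrightarrow> A \<subseteq> {1..n} \<and> card A = n - f"

definition audit_view :: "('p, 'v) hist \<Rightarrow> nat set \<Rightarrow> (nat \<times> ('p, 'v) lrec list) list \<Rightarrow> bool" where
  "audit_view h A xs \<longleftrightarrow> distinct (map fst xs) \<and> set (map fst xs) = A \<and>
     (\<forall>(k, l) \<in> set xs. l = rep h k)"

type_synonym ('p, 'v) audit = "(nat \<times> ('p, 'v) lrec list) list \<Rightarrow> ('p \<times> 'v) set"

definition evidence_based :: "nat \<Rightarrow> ('p, 'v) audit \<Rightarrow> bool" where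
  "evidence_based t aud \<longleftrightarrow> 1 \<le> t \<and>
     (\<forall>xs p v. (p, v) \<in> aud xs \<longrightarrow> t \<le> card {k. \<exists>l. (k, l) \<in> set xs \<and> (p, Some v) \<in> set l})"

definition complete :: "nat \<Rightarrow> nat \<Rightarrow> nat \<Rightarrow> ('p, 'v) audit \<Rightarrow> bool" where
  "complete n f \<tau> aud \<longleftrightarrow>
     (\<forall>h A xs p v. admissible n f h \<and> quorum n f A \<and> audit_view h A xs \<and>
        \<tau> \<le> card (providing n h p v) \<longrightarrow> (p, v) \<in> aud xs)"

definition strongly_accurate :: "nat \<Rightarrow> nat \<Rightarrow> nat \<Rightarrow> ('p, 'v) audit \<Rightarrow> bool" where
  "strongly_accurate n f \<tau> aud \<longleftrightarrow>
     (\<forall>h A xs p v. admissible n f h \<and> quorum n f A \<and> audit_view h A xs \<and>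
        p \<in> creaders h \<and> card (providing n h p v) < \<tau> \<longrightarrow> (p, v) \<notin> aud xs)"

end

theory Submission
  imports Defs
begin

theorem theorem2:
  fixes n f \<tau> :: nat
  assumes "1 \<le> f" and "f < \<tau>" and "\<tau> \<le> n"
  shows "\<not> (\<exists>(aud :: ('p, 'v) audit) t.
            evidence_based t aud \<and> complete n f \<tau> aud \<and> strongly_accurate n f \<tau> aud)"
proof
  assume "\<exists>(aud :: ('p, 'v) audit) t.
            evidence_based t aud \<and> complete n f \<tau> aud \<and> strongly_accurate n f \<tau> aud"
  then obtain aud :: "('p, 'v) audit" where C: "complete n f \<tau> aud"
    and S: "strongly_accurate n f \<tau> aud" by blast
  fix p :: 'p and v :: 'v
  define e1 :: "nat \<Rightarrow> ('p, 'v) oev list" where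
    "e1 = (\<lambda>k. if k \<le> \<tau> then [Wr v, Rd p True] else [Rd p True])"
  define e2 :: "nat \<Rightarrow> ('p, 'v) oev list" where
    "e2 = (\<lambda>k. if k = 1 then [Rd p False] else e1 k)"
  define r where "r = (\<lambda>k. tlog None (e1 k))"
  define h1 :: "('p, 'v) hist" where "h1 = \<lparr>evs = e1, faulty = {}, creaders = {p}, rep = r\<rparr>"
  define h2 :: "('p, 'v) hist" where "h2 = \<lparr>evs = e2, faulty = {1}, creaders = {p}, rep = r\<rparr>"
  define A where "A = {1..n-f}"
  define xs where "xs = map (\<lambda>k. (k, r k)) [1..<n-f+1]"
  have q: "quorum n f A" unfolding quorum_def A_def by auto
  have av1: "audit_view h1 A xs" unfolding audit_view_def xs_def A_def h1_def
    by (auto simp: comp_def distinct_map)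
  have av2: "audit_view h2 A xs" unfolding audit_view_def xs_def A_def h2_def
    by (auto simp: comp_def distinct_map)
  have ad1: "admissible n f h1" unfolding admissible_def h1_def r_def e1_def nreads_def
    by auto
  have ad2: "admissible n f h2" unfolding admissible_def h2_def r_def e2_def e1_def nreads_def
    using assms by auto
  have ws: "wstate [Wr v] = Some v" by (simp add: wstate_def)
  have P1: "providing n h1 p v = {1..\<tau>}"
  proof -
    have "k \<in> providing n h1 p v \<longleftrightarrow> k \<in> {1..\<tau>}" for k
    proof
      assume "k \<in> providing n h1 p v" then show "k \<in> {1..\<tau>}"
        unfolding providing_def h1_def e1_def by (auto split: if_splits)
    next
      assume k: "k \<in> {1..\<tau>}"
      have "\<exists>i < length (e1 k). e1 k ! i = Rd p True \<and> wstate (take i (e1 k)) = Some v"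
        using k ws by (intro exI[of _ 1]) (auto simp: e1_def)
      then show "k \<in> providing n h1 p v" using k assms
        unfolding providing_def h1_def by (auto simp: e1_def)
    qed
    then show ?thesis by blast
  qed
  have P2: "providing n h2 p v \<subseteq> {2..\<tau>}"
    unfolding providing_def h2_def e2_def e1_def by (auto split: if_splits)
  have "card (providing n h2 p v) < \<tau>"
  proof -
    have "card (providing n h2 p v) \<le> card {2..\<tau>}" using P2 by (intro card_mono) auto
    then show ?thesis using assms by simp
  qed
  moreover have "p \<in> creaders h2" by (simp add: h2_def)
  ultimately have "(p, v) \<notin> aud xs" using S q av2 ad2
    unfolding strongly_accurate_def by blast
  moreover have "(p, v) \<in> aud xs" using C q av1 ad1 P1
    unfolding complete_def by (metis card_atLeastAtMost diff_Suc_1 order_refl)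
  ultimately show False by blast
qed

end
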